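(* Let $A$ be an $n\times(n+1)$ matrix over a commutative ring with columns $A_1,\dots,A_{n+1}$. For $1\le l\le n+1$ let $A^{(l)}$ be the $n\times n$ matrix obtained from $A$ by deleting the column $A_l$. For a subset $I\subset\{1,\dots,n\}$ let $A(I)$ be the $n\times n$ matrix whose $i$-th row equals the $i$-th row of $A^{(n+1)}$ if $i\in I$ and the $i$-th row of $A^{(1)}$ if $i\notin I$. Then for every $1\le l\le n+1$, $$\det A^{(l)}=\sum_{I\subset\{1,\dots,n\},\ |I|=l-1}\det A(I).$$ *)

theory Defs
  imports "Jordan_Normal_Form.Determinant"
begin

text \<open>Indices are 0-based (Jordan_Normal_Form convention). For a matrix A with
  n rows and n+1 columns, columns are A_1..A_{n+1} in the paper, i.e. 0..n here.\<close>

text \<open>del_col A l: the n x n matrix obtained from A by deleting the l-th column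
  (paper's 1-based index l, so 0-based column l-1 is removed).\<close>
definition del_col :: "'a mat \<Rightarrow> nat \<Rightarrow> 'a mat" where
  "del_col A l = mat (dim_row A) (dim_col A - 1)
     (\<lambda>(i, j). A $$ (i, if j < l - 1 then j else j + 1))"

definition mixed_mat :: "'a mat \<Rightarrow> nat set \<Rightarrow> 'a mat" where
  "mixed_mat A I = mat (dim_row A) (dim_col A - 1)
     (\<lambda>(i, j). if i \<in> I then del_col A (dim_col A) $$ (i, j) else del_col A 1 $$ (i, j))"

end

theory Submission imports Defs begin
definition colsel :: "'a mat \<Rightarrow> nat \<Rightarrow> nat set \<Rightarrow> 'a mat" where
  "colsel A n Z = mat n n (\<lambda>(i,j). A $$ (i, if j \<in> Z then j else j + 1))"

lemma down_closed:
  fixes Z :: "nat set"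
  assumes fin: "finite Z" and dc: "\<And>j. Suc j \<in> Z \<Longrightarrow> j \<in> Z"
  shows "Z = {0..<card Z}"
proof -
  have down: "y \<in> Z" if "x \<in> Z" "y \<le> x" for x y
    using that
  proof (induction "x - y" arbitrary: y)
    case 0 then show ?case by auto
  next
    case (Suc d)
    have "d = x - Suc y" "Suc y \<le> x" using Suc.hyps(2) by arith+
    then have "Suc y \<in> Z" using Suc.hyps(1) Suc.prems(1) by blast
    then show ?case using dc by auto
  qed
  have sub: "Z \<subseteq> {0..<card Z}"
  proof
    fix k assume k: "k \<in> Z"
    have "{0..k} \<subseteq> Z" using down k by auto
    then have "card {0..k} \<le> card Z" using fin by (rule card_mono[rotated])
    then show "k \<in> {0..<card Z}" by auto
  qed
  show ?thesis using card_subset_eq[OF _ sub] by auto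
qed
lemma det_colsel_zero:
  fixes A :: "'a :: comm_ring_1 mat"
  assumes Z: "Z \<subseteq> {0..<n}" and ne: "Z \<noteq> {0..<card Z}"
  shows "det (colsel A n Z) = 0"
proof -
  have fin: "finite Z" using Z finite_subset by blast
  obtain j where j: "Suc j \<in> Z" "j \<notin> Z" using down_closed[OF fin] ne by blast
  have jn: "Suc j < n" using j Z by auto
  show ?thesis
    by (rule det_identical_columns[of _ n j "Suc j"], insert j jn,
        auto simp: colsel_def col_def intro!: eq_vecI)
qed

lemma det_colsel_init:
  fixes A :: "'a :: comm_ring_1 mat"
  assumes A: "A \<in> carrier_mat n (n + 1)" and k: "k \<le> n"
  shows "colsel A n {0..<k} = del_col A (k+1)"
  using A k by (auto simp: colsel_def del_col_def intro!: eq_matI)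

lemma mixed_eq:
  fixes A :: "'a :: comm_ring_1 mat"
  assumes A: "A \<in> carrier_mat n (n + 1)"
  shows "mixed_mat A I = mat n n (\<lambda>(i,j). A $$ (i, if i \<in> I then j else j + 1))"
  using A by (auto simp: mixed_mat_def del_col_def intro!: eq_matI)

theorem mainTheorem5:
  fixes A :: "'a :: comm_ring_1 mat" and n l :: nat
  assumes "A \<in> carrier_mat n (n + 1)"
    and "1 \<le> l" and "l \<le> n + 1"
  shows "det (del_col A l) = (\<Sum>I \<in> {I. I \<subseteq> {0..<n} \<and> card I = l - 1}. det (mixed_mat A I))"
proof -
  define k where "k = l - 1"
  have kn: "k \<le> n" and lk: "l = k + 1" using assms k_def by auto
  define S where "S = {I. I \<subseteq> {0..<n} \<and> card I = k}"
  define P where "P = {p. p permutes {0..<n}}"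
  have finS: "finite S" unfolding S_def by (rule finite_subset[of _ "Pow {0..<n}"]) auto
  have finP: "finite P" unfolding P_def by (rule finite_permutations) auto
  define F where "F p I = signof p * (\<Prod>i = 0..<n. A $$ (i, if i \<in> I then p i else p i + 1))" for p I
  define G where "G p Z = signof p * (\<Prod>i = 0..<n. A $$ (i, if p i \<in> Z then p i else p i + 1))" for p Z
  have mixed: "det (mixed_mat A I) = (\<Sum>p\<in>P. F p I)" for I
  proof -
    have "det (mixed_mat A I) = (\<Sum>p\<in>P. signof p * (\<Prod>i = 0..<n. mixed_mat A I $$ (i, p i)))"
      unfolding P_def by (rule det_def') (simp add: mixed_eq[OF assms(1)])
    also have "\<dots> = (\<Sum>p\<in>P. F p I)"
    proof (rule sum.cong[OF refl])
      fix p assume p: "p \<in> P"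
      have "p i < n" if "i < n" for i using p that unfolding P_def
        by (simp add: permutes_in_image)
      then show "signof p * (\<Prod>i = 0..<n. mixed_mat A I $$ (i, p i)) = F p I"
        unfolding F_def by (auto simp: mixed_eq[OF assms(1)] intro!: prod.cong)
    qed
    finally show ?thesis .
  qed
  have colsel: "det (colsel A n Z) = (\<Sum>p\<in>P. G p Z)" for Z
  proof -
    have "det (colsel A n Z) = (\<Sum>p\<in>P. signof p * (\<Prod>i = 0..<n. colsel A n Z $$ (i, p i)))"
      unfolding P_def by (rule det_def') (simp add: colsel_def)
    also have "\<dots> = (\<Sum>p\<in>P. G p Z)"
    proof (rule sum.cong[OF refl])
      fix p assume p: "p \<in> P"
      have "p i < n" if "i < n" for i using p that unfolding P_def
        by (simp add: permutes_in_image)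
      then show "signof p * (\<Prod>i = 0..<n. colsel A n Z $$ (i, p i)) = G p Z"
        unfolding G_def by (auto simp: colsel_def intro!: prod.cong)
    qed
    finally show ?thesis .
  qed
  have reidx: "(\<Sum>I\<in>S. F p I) = (\<Sum>Z\<in>S. G p Z)" if p: "p \<in> P" for p
  proof -
    have perm: "p permutes {0..<n}" using p unfolding P_def by simp
    have inj: "inj p" using perm permutes_inj by blast
    have bij: "bij_betw (image p) S S"
    proof (rule bij_betw_imageI)
      show "inj_on (image p) S" using inj by (simp add: inj_on_def inj_image_eq_iff)
      show "image p ` S = S"
      proof
        show "image p ` S \<subseteq> S" unfolding S_def
          using perm inj by (auto simp: permutes_image card_image inj_on_subset[OF inj]
              permutes_in_image)
        show "S \<subseteq> image p ` S"
        proof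
          fix Z assume Z: "Z \<in> S"
          have pinv: "inv_into UNIV p permutes {0..<n}" using perm by (rule permutes_inv)
          have injinv: "inj (inv_into UNIV p)" using pinv permutes_inj by blast
          have "inv_into UNIV p ` Z \<in> S" using Z unfolding S_def
            using pinv injinv by (auto simp: card_image inj_on_subset[OF injinv]
              permutes_in_image)
          moreover have "Z = p ` (inv_into UNIV p ` Z)"
            using perm by (simp add: image_comp permutes_inverses(1) image_ident o_def)
          ultimately show "Z \<in> image p ` S" by blast
        qed
      qed
    qed
    have "(\<Sum>Z\<in>S. G p Z) = (\<Sum>I\<in>S. G p (p ` I))"
      by (rule sum.reindex_bij_betw[OF bij, symmetric])
    also have "\<dots> = (\<Sum>I\<in>S. F p I)"
      unfolding F_def G_def using inj by (simp add: inj_image_mem_iff)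
    finally show ?thesis by simp
  qed
  have "(\<Sum>I\<in>S. det (mixed_mat A I)) = (\<Sum>I\<in>S. \<Sum>p\<in>P. F p I)" using mixed by simp
  also have "\<dots> = (\<Sum>p\<in>P. \<Sum>I\<in>S. F p I)" by (rule sum.swap)
  also have "\<dots> = (\<Sum>p\<in>P. \<Sum>Z\<in>S. G p Z)" using reidx by simp
  also have "\<dots> = (\<Sum>Z\<in>S. \<Sum>p\<in>P. G p Z)" by (rule sum.swap)
  also have "\<dots> = (\<Sum>Z\<in>S. det (colsel A n Z))" using colsel by simp
  also have "\<dots> = det (colsel A n {0..<k})"
  proof -
    have mem: "{0..<k} \<in> S" using kn unfolding S_def by auto
    have z: "(\<Sum>Z\<in>S - {{0..<k}}. det (colsel A n Z)) = 0"
    proof (rule sum.neutral, rule ballI)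
      fix Z assume "Z \<in> S - {{0..<k}}"
      then show "det (colsel A n Z) = 0" unfolding S_def
        by (intro det_colsel_zero) auto
    qed
    show ?thesis using sum.remove[OF finS mem, of "\<lambda>Z. det (colsel A n Z)"] z by simp
  qed
  also have "\<dots> = det (del_col A l)" using det_colsel_init[OF assms(1) kn] lk by simp
  finally show ?thesis unfolding S_def k_def by simp
qed

end
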